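(* Assume the L-smoothness assumption and the $\mu$-convexity assumption (with some $\mu\ge 0$) hold, let $x^\star$ be a minimizer of $f$, and assume $\sigma_f^2<\infty$. Let $c>0$ and $\gamma_b>0$ be the FedSPS parameters and set $\alpha:=\min\{\frac{1}{2cL},\gamma_b\}$. (a) (Convex case.) If $c\ge 2\tau^2$, then for every $T\ge1$ the iterates of FedSPS satisfy $$\frac{1}{Tn}\sum_{t=0}^{T-1}\sum_{i=1}^n \mathbb E\big[f_i(x_t^i)-f_i(x^\star)\big]\;\le\;\frac{2}{T\alpha}\|\bar x_0-x^\star\|^2+\frac{4\gamma_b\sigma_f^2}{\alpha}.$$ (b) (Strongly convex case.) If $\mu>0$ and $c\ge 4\tau^2$, then for every $T\ge1$ $$\mathbb E\|\bar x_T-x^\star\|^2\;\le\;\frac{1}{\mu\alpha}(1-\mu\alpha)^T\|\bar x_0-x^\star\|^2+\frac{2\gamma_b\sigma_f^2}{\alpha\mu}.$$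
   Context: Setting: integers $n\ge1$ (clients), $d\ge1$, $\tau\ge1$ (number of local steps between communications). For each client $i\in[n]$, $\mathcal D_i$ is a probability distribution on a set $\Omega_i$ and $F_i:\mathbb R^d\times\Omega_i\to\mathbb R$ is such that $F_i(\cdot,\xi)$ is differentiable for each $\xi\in\operatorname{supp}(\mathcal D_i)$; $f_i(x):=\mathbb E_{\xi\sim\mathcal D_i}F_i(x,\xi)$ with $\mathbb E_{\xi\sim\mathcal D_i}\nabla F_i(x,\xi)=\nabla f_i(x)$, and $f:=\frac1n\sum_{i=1}^n f_i$. Let $F_i^\star:=\inf_{\xi\in\operatorname{supp}(\mathcal D_i),\,x\in\mathbb R^d}F_i(x,\xi)$ and let $\ell_i^\star$ be given real numbers with $\ell_i^\star\le F_i^\star$. FedSPS with parameters $c>0$, $\gamma_b>0$: start from $x_0^i=x_0$ for all $i$. At each iteration $t=0,1,2,\dots$, each client $i$ draws $\xi_t^i\sim\mathcal D_i$ independently of everything else, computes $g_t^i:=\nabla F_i(x_t^i,\xi_t^i)$ and the stepsize $\gamma_t^i:=\min\{\frac{F_i(x_t^i,\xi_t^i)-\ell_i^\star}{c\|g_t^i\|^2},\gamma_b\}$ (the first term is read as $+\infty$ if $g_t^i=0$). If $t+1$ is a multiple of $\tau$, then $x_{t+1}^i:=\frac1n\sum_{j=1}^n(x_t^j-\gamma_t^jg_t^j)$ for every $i$; otherwise $x_{t+1}^i:=x_t^i-\gamma_t^ig_t^i$. Define $\bar x_t:=\frac1n\sum_{i=1}^n x_t^i$. Expectations are over all sampled $\xi_t^i$.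 L-smoothness assumption: there is $L\ge0$ with $\|\nabla F_i(y,\xi)-\nabla F_i(x,\xi)\|\le L\|x-y\|$ for all $i$, all $\xi\in\operatorname{supp}(\mathcal D_i)$, all $x,y$. $\mu$-convexity assumption: for all $i$, $\xi\in\operatorname{supp}(\mathcal D_i)$, $x,y$: $F_i(y,\xi)\ge F_i(x,\xi)+\langle\nabla F_i(x,\xi),y-x\rangle+\frac\mu2\|y-x\|^2$. With $x^\star$ a minimizer of $f$ and $f^\star=f(x^\star)$, the finite optimal objective difference is $\sigma_f^2:=\frac1n\sum_{i=1}^n(f_i(x^\star)-\ell_i^\star)$. *)

theory Defs
  imports "HOL-Probability.Probability"
begin

definition loc_obj :: "(nat \<Rightarrow> 'v \<Rightarrow> 'a \<Rightarrow> real) \<Rightarrow> (nat \<Rightarrow> 'a measure) \<Rightarrow> nat \<Rightarrow> 'v \<Rightarrow> real" where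
  "loc_obj F D i x = (\<integral>\<xi>. F i x \<xi> \<partial>D i)"

definition glob_obj :: "(nat \<Rightarrow> 'v \<Rightarrow> 'a \<Rightarrow> real) \<Rightarrow> (nat \<Rightarrow> 'a measure) \<Rightarrow> nat \<Rightarrow> 'v \<Rightarrow> real" where
  "glob_obj F D n x = (\<Sum>i<n. loc_obj F D i x) / real n"

text \<open>Stochastic Polyak stepsize of FedSPS: min{(F - l)/(c ||g||^2), gamma_b},
  the first term read as +infinity when g = 0.\<close>
definition sps_step :: "real \<Rightarrow> real \<Rightarrow> real \<Rightarrow> real \<Rightarrow> 'v::real_normed_vector \<Rightarrow> real" where
  "sps_step c gb Fval l g = (if g = 0 then gb else min ((Fval - l) / (c * (norm g)\<^sup>2)) gb)"

text \<open>FedSPS iterates.  The sample path is w :: nat \<times> nat \<Rightarrow> 'a, with w (t, i) = xi_t^i.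
  fedsps ... w t i = x_t^i.\<close>
fun fedsps :: "(nat \<Rightarrow> 'v::real_normed_vector \<Rightarrow> 'a \<Rightarrow> real) \<Rightarrow> (nat \<Rightarrow> 'v \<Rightarrow> 'a \<Rightarrow> 'v) \<Rightarrow>
    (nat \<Rightarrow> real) \<Rightarrow> real \<Rightarrow> real \<Rightarrow> nat \<Rightarrow> nat \<Rightarrow> 'v \<Rightarrow> (nat \<times> nat \<Rightarrow> 'a) \<Rightarrow> nat \<Rightarrow> nat \<Rightarrow> 'v" where
  "fedsps F G l c gb tau n x0 w 0 = (\<lambda>i. x0)"
| "fedsps F G l c gb tau n x0 w (Suc t) =
     (let x = fedsps F G l c gb tau n x0 w t;
          upd = (\<lambda>j. x j - sps_step c gb (F j (x j) (w (t, j))) (l j) (G j (x j) (w (t, j)))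
                              *\<^sub>R G j (x j) (w (t, j)))
      in if tau dvd Suc t then (\<lambda>i. (1 / real n) *\<^sub>R (\<Sum>j<n. upd j)) else upd)"

definition fedsps_avg where
  "fedsps_avg F G l c gb tau n x0 w t = (1 / real n) *\<^sub>R (\<Sum>i<n. fedsps F G l c gb tau n x0 w t i)"

definition sample_space :: "(nat \<Rightarrow> 'a measure) \<Rightarrow> nat \<Rightarrow> nat \<Rightarrow> (nat \<times> nat \<Rightarrow> 'a) measure" where
  "sample_space D n T = PiM ({..<T} \<times> {..<n}) (\<lambda>(t, i). D i)"

end

theory Submission
  imports Defs
begin

lemma descent:
  fixes f :: "'v::real_inner \<Rightarrow> real" and g :: "'v \<Rightarrow> 'v"
  assumes der: "\<And>x. (f has_derivative (\<lambda>h. g x \<bullet> h)) (at x)"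
    and lip: "\<And>x y. norm (g y - g x) \<le> L * norm (x - y)"
  shows "f y \<le> f x + g x \<bullet> (y - x) + L / 2 * (norm (y - x))\<^sup>2"
proof -
  define v where "v = y - x"
  define phi where "phi s = f (x + s *\<^sub>R v) - s * (g x \<bullet> v) - L / 2 * s\<^sup>2 * (norm v)\<^sup>2" for s :: real
  have "phi 1 \<le> phi 0"
  proof (rule DERIV_nonpos_imp_nonincreasing[of 0 1 phi])
    fix s :: real assume s: "0 \<le> s" "s \<le> 1"
    have d1: "((\<lambda>s. f (x + s *\<^sub>R v)) has_derivative (\<lambda>h. g (x + s *\<^sub>R v) \<bullet> (h *\<^sub>R v))) (at s)"
      by (rule has_derivative_compose[OF _ der]) (auto intro!: derivative_eq_intros)
    have "(phi has_derivative (\<lambda>h. g (x + s *\<^sub>R v) \<bullet> (h *\<^sub>R v) - h * (g x \<bullet> v) - L / 2 * (2 * s * h) * (norm v)\<^sup>2)) (at s)"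
      unfolding phi_def by (auto intro!: derivative_eq_intros d1 simp: fun_eq_iff algebra_simps)
    hence "DERIV phi s :> (g (x + s *\<^sub>R v) \<bullet> v - g x \<bullet> v - L * s * (norm v)\<^sup>2)"
      unfolding has_field_derivative_def by (rule has_derivative_eq_rhs) (simp add: fun_eq_iff algebra_simps)
    moreover have "g (x + s *\<^sub>R v) \<bullet> v - g x \<bullet> v \<le> L * s * (norm v)\<^sup>2"
    proof -
      have "g (x + s *\<^sub>R v) \<bullet> v - g x \<bullet> v = (g (x + s *\<^sub>R v) - g x) \<bullet> v" by (simp add: inner_diff_left)
      also have "\<dots> \<le> norm (g (x + s *\<^sub>R v) - g x) * norm v" by (rule norm_cauchy_schwarz)
      also have "\<dots> \<le> L * norm (x - (x + s *\<^sub>R v)) * norm v" using lip[of x "x + s *\<^sub>R v"] by (intro mult_right_mono) (auto simp: norm_minus_commute)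
      also have "\<dots> = L * s * (norm v)\<^sup>2" using s by (simp add: power2_eq_square)
      finally show ?thesis .
    qed
    ultimately show "\<exists>y. DERIV phi s :> y \<and> y \<le> 0" by force
  qed simp
  thus ?thesis by (simp add: phi_def v_def)
qed

lemma grad_bound:
  fixes f :: "'v::real_inner \<Rightarrow> real" and g :: "'v \<Rightarrow> 'v"
  assumes der: "\<And>x. (f has_derivative (\<lambda>h. g x \<bullet> h)) (at x)"
    and lip: "\<And>x y. norm (g y - g x) \<le> L * norm (x - y)"
    and L: "L \<ge> 0" and low: "\<And>x. l \<le> f x"
  shows "(norm (g x))\<^sup>2 \<le> 2 * L * (f x - l)"
proof -
  have key: "l \<le> f x - s * (norm (g x))\<^sup>2 + L / 2 * s\<^sup>2 * (norm (g x))\<^sup>2" if "s \<ge> 0" for s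
  proof -
    have "l \<le> f (x - s *\<^sub>R g x)" by (rule low)
    also have "\<dots> \<le> f x + g x \<bullet> ((x - s *\<^sub>R g x) - x) + L / 2 * (norm ((x - s *\<^sub>R g x) - x))\<^sup>2"
      by (rule descent[OF der lip])
    also have "\<dots> = f x - s * (norm (g x))\<^sup>2 + L / 2 * s\<^sup>2 * (norm (g x))\<^sup>2"
      using that by (simp add: power2_norm_eq_inner power_mult_distrib)
    finally show ?thesis .
  qed
  show ?thesis
  proof (cases "L = 0")
    case True
    show ?thesis
    proof (rule ccontr)
      assume "\<not> ?thesis"
      hence pos: "(norm (g x))\<^sup>2 > 0" using True by simp
      define s where "s = (f x - l + 1) / (norm (g x))\<^sup>2"
      have "s \<ge> 0" using low[of x] pos by (simp add: s_def)
      from key[OF this] True have "l \<le> f x - s * (norm (g x))\<^sup>2" by simp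
      moreover have "s * (norm (g x))\<^sup>2 = f x - l + 1" using pos by (simp add: s_def)
      ultimately show False by simp
    qed
  next
    case False
    hence Lp: "L > 0" using L by simp
    from key[of "1/L"] Lp have "l \<le> f x - (norm (g x))\<^sup>2 / L + (norm (g x))\<^sup>2 / (2 * L)"
      by (simp add: power2_eq_square field_simps)
    hence "(norm (g x))\<^sup>2 / (2 * L) \<le> f x - l" by (simp add: field_simps)
    thus ?thesis using Lp by (simp add: field_simps)
  qed
qed

lemma sps_facts:
  fixes g :: "'v::real_normed_vector"
  assumes c: "c > 0" and gb: "gb > 0" and L: "L \<ge> 0" and al: "a \<ge> l"
    and gr: "(norm g)\<^sup>2 \<le> 2 * L * (a - l)"
  shows "0 \<le> sps_step c gb a l g" "sps_step c gb a l g \<le> gb"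
    "sps_step c gb a l g * (norm g)\<^sup>2 \<le> (a - l) / c"
    "(if L = 0 then gb else min (1 / (2 * c * L)) gb) \<le> sps_step c gb a l g"
proof -
  show "0 \<le> sps_step c gb a l g" using c gb al by (simp add: sps_step_def)
  show "sps_step c gb a l g \<le> gb" by (simp add: sps_step_def)
  show "sps_step c gb a l g * (norm g)\<^sup>2 \<le> (a - l) / c"
  proof (cases "g = 0")
    case True thus ?thesis using al c by (simp add: sps_step_def)
  next
    case False
    hence p: "(norm g)\<^sup>2 > 0" by simp
    have "sps_step c gb a l g \<le> (a - l) / (c * (norm g)\<^sup>2)" using False by (simp add: sps_step_def)
    hence "sps_step c gb a l g * (norm g)\<^sup>2 \<le> (a - l) / (c * (norm g)\<^sup>2) * (norm g)\<^sup>2"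
      using p by (intro mult_right_mono) auto
    thus ?thesis using p by simp
  qed
  show "(if L = 0 then gb else min (1 / (2 * c * L)) gb) \<le> sps_step c gb a l g"
  proof (cases "g = 0")
    case True thus ?thesis by (simp add: sps_step_def)
  next
    case False
    hence p: "(norm g)\<^sup>2 > 0" by simp
    have "2 * L * (a - l) > 0" using p gr by linarith
    hence "L \<noteq> 0" "a - l \<noteq> 0" by auto
    hence Lp: "L > 0" and alp: "a - l > 0" using L al by auto
    have "1 / (2 * c * L) \<le> (a - l) / (c * (norm g)\<^sup>2)"
      using Lp alp c p gr by (simp add: field_simps)
    thus ?thesis using False Lp by (auto simp: sps_step_def)
  qed
qed

lemma var_decomp:
  fixes v :: "'i \<Rightarrow> 'v::real_inner"
  assumes "finite I" "I \<noteq> {}"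
  shows "(\<Sum>i\<in>I. (norm (y - v i))\<^sup>2) = (\<Sum>i\<in>I. (norm ((1 / real (card I)) *\<^sub>R sum v I - v i))\<^sup>2)
           + real (card I) * (norm (y - (1 / real (card I)) *\<^sub>R sum v I))\<^sup>2"
proof -
  define u where "u = (1 / real (card I)) *\<^sub>R sum v I"
  have m: "real (card I) > 0" using assms by (simp add: card_gt_0_iff)
  have su: "(\<Sum>i\<in>I. u - v i) = 0"
    using m by (simp add: sum_subtractf u_def sum_constant_scaleR)
  have "(\<Sum>i\<in>I. (norm (y - v i))\<^sup>2) = (\<Sum>i\<in>I. (norm (u - v i))\<^sup>2 + 2 * ((y - u) \<bullet> (u - v i)) + (norm (y - u))\<^sup>2)"
  proof (rule sum.cong)
    fix i assume "i \<in> I"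
    have e: "(norm (a + b))\<^sup>2 = (norm b)\<^sup>2 + 2 * (a \<bullet> b) + (norm a)\<^sup>2" for a b :: 'v
      by (simp add: power2_norm_eq_inner inner_add_left inner_add_right inner_commute)
    show "(norm (y - v i))\<^sup>2 = (norm (u - v i))\<^sup>2 + 2 * ((y - u) \<bullet> (u - v i)) + (norm (y - u))\<^sup>2"
      using e[of "y - u" "u - v i"] by simp
  qed simp
  also have "\<dots> = (\<Sum>i\<in>I. (norm (u - v i))\<^sup>2) + 2 * ((y - u) \<bullet> (\<Sum>i\<in>I. u - v i)) + real (card I) * (norm (y - u))\<^sup>2"
    by (simp add: sum.distrib inner_sum_right sum_distrib_left)
  finally show ?thesis using su by (simp add: u_def)
qed

lemma norm_sum_sq:
  fixes v :: "'i \<Rightarrow> 'v::real_inner"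
  assumes "finite I"
  shows "(norm (sum v I))\<^sup>2 \<le> real (card I) * (\<Sum>i\<in>I. (norm (v i))\<^sup>2)"
proof (cases "I = {}")
  case True thus ?thesis by simp
next
  case False
  have m: "real (card I) > 0" using assms False by (simp add: card_gt_0_iff)
  have eq: "(\<Sum>i\<in>I. (norm (0 - v i))\<^sup>2) = (\<Sum>i\<in>I. (norm ((1 / real (card I)) *\<^sub>R sum v I - v i))\<^sup>2)
           + real (card I) * (norm (0 - (1 / real (card I)) *\<^sub>R sum v I))\<^sup>2"
    by (rule var_decomp[OF assms False])
  have "0 \<le> (\<Sum>i\<in>I. (norm ((1 / real (card I)) *\<^sub>R sum v I - v i))\<^sup>2)" by (intro sum_nonneg) auto
  with eq have "real (card I) * (norm ((1 / real (card I)) *\<^sub>R sum v I))\<^sup>2 \<le> (\<Sum>i\<in>I. (norm (v i))\<^sup>2)"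
    by simp
  hence "(norm (sum v I))\<^sup>2 / real (card I) \<le> (\<Sum>i\<in>I. (norm (v i))\<^sup>2)"
    using m by (simp add: power2_eq_square field_simps)
  thus ?thesis using m by (simp add: field_simps)
qed




locale fed =
  fixes n tau :: nat and D :: "nat \<Rightarrow> 'a measure" and F :: "nat \<Rightarrow> 'v::euclidean_space \<Rightarrow> 'a \<Rightarrow> real"
    and G :: "nat \<Rightarrow> 'v \<Rightarrow> 'a \<Rightarrow> 'v" and l :: "nat \<Rightarrow> real" and L mu c gb :: real and x0 xstar :: 'v
  assumes n_pos: "n \<ge> 1" and tau_pos: "tau \<ge> 1" and L_nonneg: "L \<ge> 0" and mu_nonneg: "mu \<ge> 0"
    and c_pos: "c > 0" and gb_pos: "gb > 0"
begin

definition good :: "nat \<Rightarrow> 'a \<Rightarrow> bool" where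
 "good i \<xi> \<longleftrightarrow> (\<forall>x. ((\<lambda>z. F i z \<xi>) has_derivative (\<lambda>h. G i x \<xi> \<bullet> h)) (at x)) \<and> (\<forall>x. l i \<le> F i x \<xi>)
     \<and> (\<forall>x y. norm (G i y \<xi> - G i x \<xi>) \<le> L * norm (x - y))
     \<and> (\<forall>x y. F i y \<xi> \<ge> F i x \<xi> + G i x \<xi> \<bullet> (y - x) + mu / 2 * (norm (y - x))\<^sup>2)"

definition "alpha = (if L = 0 then gb else min (1 / (2 * c * L)) gb)"
abbreviation "xx w t i \<equiv> fedsps F G l c gb tau n x0 w t i"
abbreviation "xb w t \<equiv> fedsps_avg F G l c gb tau n x0 w t"
definition gam :: "(nat \<times> nat \<Rightarrow> 'a) \<Rightarrow> nat \<Rightarrow> nat \<Rightarrow> real" where "gam w t i = sps_step c gb (F i (xx w t i) (w (t, i))) (l i) (G i (xx w t i) (w (t, i)))"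
definition dl :: "(nat \<times> nat \<Rightarrow> 'a) \<Rightarrow> nat \<Rightarrow> nat \<Rightarrow> 'v" where "dl w t i = gam w t i *\<^sub>R G i (xx w t i) (w (t, i))"
definition AA :: "(nat \<times> nat \<Rightarrow> 'a) \<Rightarrow> nat \<Rightarrow> nat \<Rightarrow> real" where "AA w t i = gam w t i * (F i (xx w t i) (w (t, i)) - l i)"
definition BB :: "(nat \<times> nat \<Rightarrow> 'a) \<Rightarrow> nat \<Rightarrow> nat \<Rightarrow> real" where "BB w t i = F i xstar (w (t, i)) - l i"
definition Ab :: "(nat \<times> nat \<Rightarrow> 'a) \<Rightarrow> nat \<Rightarrow> real" where "Ab w t = (\<Sum>i<n. AA w t i) / n"
definition Bb :: "(nat \<times> nat \<Rightarrow> 'a) \<Rightarrow> nat \<Rightarrow> real" where "Bb w t = (\<Sum>i<n. BB w t i) / n"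
definition ee :: "(nat \<times> nat \<Rightarrow> 'a) \<Rightarrow> nat \<Rightarrow> real" where "ee w t = (norm (xb w t - xstar))\<^sup>2"
definition RR :: "(nat \<times> nat \<Rightarrow> 'a) \<Rightarrow> nat \<Rightarrow> real" where "RR w t = (\<Sum>i<n. (norm (xb w t - xx w t i))\<^sup>2) / n"
definition sb :: "nat \<Rightarrow> nat" where "sb t = tau * (t div tau)"

lemma good_step:
  fixes p :: 'v
  assumes "good i \<xi>"
  defines "\<gamma> \<equiv> sps_step c gb (F i p \<xi>) (l i) (G i p \<xi>)"
  shows "0 \<le> \<gamma>" "\<gamma> \<le> gb" "\<gamma> * (norm (G i p \<xi>))\<^sup>2 \<le> (F i p \<xi> - l i) / c" "alpha \<le> \<gamma>"
    "l i \<le> F i p \<xi>"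
proof -
  have der: "\<And>x. ((\<lambda>z. F i z \<xi>) has_derivative (\<lambda>h. G i x \<xi> \<bullet> h)) (at x)"
    and low: "\<And>x. l i \<le> F i x \<xi>" and lip: "\<And>x y. norm (G i y \<xi> - G i x \<xi>) \<le> L * norm (x - y)"
    using assms(1) by (auto simp: good_def)
  have gr: "(norm (G i p \<xi>))\<^sup>2 \<le> 2 * L * (F i p \<xi> - l i)"
    by (rule grad_bound[where f="\<lambda>z. F i z \<xi>" and g = "\<lambda>x. G i x \<xi>", OF der lip L_nonneg low])
  note f = sps_facts[OF c_pos gb_pos L_nonneg low gr]
  show "0 \<le> \<gamma>" "\<gamma> \<le> gb" "\<gamma> * (norm (G i p \<xi>))\<^sup>2 \<le> (F i p \<xi> - l i) / c" "alpha \<le> \<gamma>"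
    using f by (simp_all add: \<gamma>_def alpha_def)
  show "l i \<le> F i p \<xi>" by (rule low)
qed

lemma AA_facts:
  assumes "good i (w (t, i))"
  shows "0 \<le> AA w t i" "(norm (dl w t i))\<^sup>2 \<le> AA w t i / c" "0 \<le> BB w t i"
    "0 \<le> gam w t i" "gam w t i \<le> gb" "alpha \<le> gam w t i"
proof -
  note g = good_step[OF assms, of "xx w t i", folded gam_def]
  show "0 \<le> AA w t i" using g by (simp add: AA_def)
  have "(norm (dl w t i))\<^sup>2 = gam w t i * (gam w t i * (norm (G i (xx w t i) (w (t, i))))\<^sup>2)"
    by (simp add: dl_def power_mult_distrib power2_eq_square)
  also have "\<dots> \<le> gam w t i * ((F i (xx w t i) (w (t, i)) - l i) / c)"
    using g by (intro mult_left_mono) auto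
  finally show "(norm (dl w t i))\<^sup>2 \<le> AA w t i / c" by (simp add: AA_def)
  show "0 \<le> BB w t i" using assms by (simp add: BB_def good_def)
  show "0 \<le> gam w t i" "gam w t i \<le> gb" "alpha \<le> gam w t i" using g by auto
qed

lemma x_suc: "xx w (Suc t) = (if tau dvd Suc t then (\<lambda>i. (1 / real n) *\<^sub>R (\<Sum>j<n. xx w t j - dl w t j))
    else (\<lambda>j. xx w t j - dl w t j))"
  by (simp add: dl_def gam_def Let_def)

lemma n_real: "real n > 0" using n_pos by simp

lemma avg_step: "xb w (Suc t) = xb w t - (1 / real n) *\<^sub>R (\<Sum>i<n. dl w t i)"
proof (cases "tau dvd Suc t")
  case True
  have "xb w (Suc t) = (1 / real n) *\<^sub>R (\<Sum>i<n. (1 / real n) *\<^sub>R (\<Sum>j<n. xx w t j - dl w t j))"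
    using True by (simp add: fedsps_avg_def x_suc del: fedsps.simps)
  also have "\<dots> = (1 / real n) *\<^sub>R (\<Sum>j<n. xx w t j - dl w t j)"
    using n_real by (simp add: sum_constant_scaleR)
  finally show ?thesis by (simp add: fedsps_avg_def sum_subtractf scaleR_diff_right)
next
  case False
  thus ?thesis by (simp add: fedsps_avg_def x_suc sum_subtractf scaleR_diff_right del: fedsps.simps)
qed

lemma sb_le: "sb t \<le> t" by (simp add: sb_def)
lemma sb_gt: "t < sb t + tau"
proof -
  have "sb t + t mod tau = t" unfolding sb_def using div_mult_mod_eq[of t tau] by (simp add: mult.commute)
  moreover have "t mod tau < tau" using tau_pos by simp
  ultimately show ?thesis by linarith
qed

lemma block: "xx w t i = xb w (sb t) - (\<Sum>k\<in>{sb t..<t}. dl w k i)"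
proof (induction t arbitrary: i)
  case 0
  have "xb w 0 = x0" using n_real by (simp add: fedsps_avg_def sum_constant_scaleR)
  thus ?case by (simp add: sb_def)
next
  case (Suc t)
  show ?case
  proof (cases "tau dvd Suc t")
    case True
    hence sb: "sb (Suc t) = Suc t" by (simp add: sb_def)
    have "xb w (Suc t) = (1 / real n) *\<^sub>R (\<Sum>j<n. xx w t j - dl w t j)"
      using True n_real by (simp add: fedsps_avg_def x_suc sum_constant_scaleR del: fedsps.simps)
    thus ?thesis using True sb by (simp add: x_suc del: fedsps.simps)
  next
    case False
    have "Suc t mod tau \<noteq> 0" using False by (simp add: dvd_eq_mod_eq_0)
    hence "Suc t div tau = t div tau" by (simp add: div_Suc)
    hence sb: "sb (Suc t) = sb t" by (simp add: sb_def)
    have "{sb t..<Suc t} = insert t {sb t..<t}" using sb_le[of t] by auto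
    hence "(\<Sum>k\<in>{sb (Suc t)..<Suc t}. dl w k i) = dl w t i + (\<Sum>k\<in>{sb t..<t}. dl w k i)"
      using sb by simp
    thus ?thesis using False Suc.IH[of i] sb by (simp add: x_suc del: fedsps.simps)
  qed
qed

end


context fed begin

lemma mean_xx: "xb w t = (1 / real (card {..<n})) *\<^sub>R sum (xx w t) {..<n}"
  by (simp add: fedsps_avg_def)

lemma R_bound:
  assumes good: "\<And>k i. k < t \<Longrightarrow> i < n \<Longrightarrow> good i (w (k, i))"
  shows "RR w t \<le> (tau / c) * (\<Sum>k\<in>{sb t..<t}. Ab w k)"
proof -
  have "0 \<in> {..<n}" using n_pos by simp
  hence ne: "{..<n} \<noteq> {}" by blast
  have vd: "(\<Sum>i<n. (norm (xb w (sb t) - xx w t i))\<^sup>2) = (\<Sum>i<n. (norm (xb w t - xx w t i))\<^sup>2)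
        + real n * (norm (xb w (sb t) - xb w t))\<^sup>2"
    using var_decomp[OF finite_lessThan ne, of "xb w (sb t)" "xx w t"] by (simp add: fedsps_avg_def)
  hence "(\<Sum>i<n. (norm (xb w t - xx w t i))\<^sup>2) \<le> (\<Sum>i<n. (norm (xb w (sb t) - xx w t i))\<^sup>2)"
    by simp
  also have "\<dots> \<le> (\<Sum>i<n. tau / c * (\<Sum>k\<in>{sb t..<t}. AA w k i))"
  proof (rule sum_mono)
    fix i assume i: "i \<in> {..<n}"
    have "(norm (xb w (sb t) - xx w t i))\<^sup>2 = (norm (\<Sum>k\<in>{sb t..<t}. dl w k i))\<^sup>2"
      by (subst block) simp
    also have "\<dots> \<le> real (card {sb t..<t}) * (\<Sum>k\<in>{sb t..<t}. (norm (dl w k i))\<^sup>2)"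
      by (rule norm_sum_sq) simp
    also have "\<dots> \<le> real tau * (\<Sum>k\<in>{sb t..<t}. AA w k i / c)"
    proof (rule mult_mono)
      show "real (card {sb t..<t}) \<le> real tau" using sb_gt[of t] by simp
      show "(\<Sum>k\<in>{sb t..<t}. (norm (dl w k i))\<^sup>2) \<le> (\<Sum>k\<in>{sb t..<t}. AA w k i / c)"
      proof (rule sum_mono)
        fix k assume "k \<in> {sb t..<t}"
        hence "good i (w (k, i))" using good i by auto
        thus "(norm (dl w k i))\<^sup>2 \<le> AA w k i / c" by (rule AA_facts(2))
      qed
    qed (auto intro: sum_nonneg)
    finally show "(norm (xb w (sb t) - xx w t i))\<^sup>2 \<le> tau / c * (\<Sum>k\<in>{sb t..<t}. AA w k i)"
      by (simp add: sum_divide_distrib[symmetric])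
  qed
  also have "\<dots> = tau / c * (\<Sum>k\<in>{sb t..<t}. \<Sum>i<n. AA w k i)"
    by (simp add: sum_distrib_left sum.swap[of _ "{..<n}"])
  also have "\<dots> = tau / c * (\<Sum>k\<in>{sb t..<t}. real n * Ab w k)"
    using n_pos by (simp add: Ab_def)
  also have "\<dots> = real n * (tau / c * (\<Sum>k\<in>{sb t..<t}. Ab w k))"
    by (simp add: sum_distrib_left[symmetric])
  finally show ?thesis using n_real by (simp add: RR_def field_simps)
qed

lemma per_client:
  assumes g: "good i (w (t, i))"
  shows "- 2 * ((xb w t - xstar) \<bullet> dl w t i) + (norm (dl w t i))\<^sup>2 + AA w t i
     \<le> 2 * gb * BB w t i - alpha * mu * (norm (xstar - xx w t i))\<^sup>2 + (norm (xb w t - xx w t i))\<^sup>2 + 2 * (norm (dl w t i))\<^sup>2 - 2 * AA w t i + AA w t i"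
proof -
  define p where "p = xx w t i"
  define gg where "gg = G i p (w (t, i))"
  define \<gamma> where "\<gamma> = gam w t i"
  define r where "r = xb w t - p"
  have dl: "dl w t i = \<gamma> *\<^sub>R gg" by (simp add: dl_def gg_def \<gamma>_def p_def)
  note f = AA_facts[where w=w and t=t and i=i, OF g]
  have cv: "F i xstar (w (t, i)) \<ge> F i p (w (t, i)) + gg \<bullet> (xstar - p) + mu / 2 * (norm (xstar - p))\<^sup>2"
    using g by (simp add: good_def gg_def)
  hence "gg \<bullet> (p - xstar) \<ge> (F i p (w (t, i)) - l i) - BB w t i + mu / 2 * (norm (xstar - p))\<^sup>2"
    by (simp add: BB_def inner_diff_right)
  hence "\<gamma> * (gg \<bullet> (p - xstar)) \<ge> \<gamma> * ((F i p (w (t, i)) - l i) - BB w t i + mu / 2 * (norm (xstar - p))\<^sup>2)"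
    using f by (intro mult_left_mono) (auto simp: \<gamma>_def)
  hence A1: "\<gamma> * (gg \<bullet> (p - xstar)) \<ge> AA w t i - \<gamma> * BB w t i + \<gamma> * (mu / 2) * (norm (xstar - p))\<^sup>2"
    by (simp add: AA_def \<gamma>_def p_def algebra_simps)
  have "\<gamma> * BB w t i \<le> gb * BB w t i" using f by (intro mult_right_mono) (auto simp: \<gamma>_def)
  moreover have "alpha * (mu / 2) * (norm (xstar - p))\<^sup>2 \<le> \<gamma> * (mu / 2) * (norm (xstar - p))\<^sup>2"
    using f mu_nonneg by (intro mult_right_mono) (auto simp: \<gamma>_def)
  ultimately have A2: "\<gamma> * (gg \<bullet> (p - xstar)) \<ge> AA w t i - gb * BB w t i + alpha * (mu / 2) * (norm (xstar - p))\<^sup>2"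
    using A1 by linarith
  have "0 \<le> (norm (dl w t i + r))\<^sup>2" by simp
  hence A3: "- 2 * (dl w t i \<bullet> r) \<le> (norm (dl w t i))\<^sup>2 + (norm r)\<^sup>2"
    by (simp add: power2_norm_eq_inner inner_add_left inner_add_right inner_commute)
  have "(xb w t - xstar) \<bullet> dl w t i = \<gamma> * (gg \<bullet> (p - xstar)) + dl w t i \<bullet> r"
    by (simp add: dl r_def inner_diff_left inner_diff_right inner_commute algebra_simps)
  thus ?thesis using A2 A3 by (simp add: r_def p_def algebra_simps)
qed

lemma step_ineq:
  assumes good: "\<And>i. i < n \<Longrightarrow> good i (w (t, i))" and c2: "c \<ge> 2"
  shows "ee w (Suc t) \<le> (1 - mu * alpha) * ee w t - Ab w t + 2 * gb * Bb w t + RR w t"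
proof -
  define z where "z = xb w t - xstar"
  define md where "md = (1 / real n) *\<^sub>R (\<Sum>i<n. dl w t i)"
  have eq1: "ee w (Suc t) = (norm z)\<^sup>2 - 2 * (z \<bullet> md) + (norm md)\<^sup>2"
  proof -
    have "ee w (Suc t) = (norm (z - md))\<^sup>2" by (simp add: ee_def avg_step z_def md_def algebra_simps)
    also have "\<dots> = (norm z)\<^sup>2 - 2 * (z \<bullet> md) + (norm md)\<^sup>2"
      by (simp add: power2_norm_eq_inner inner_diff_left inner_diff_right inner_commute)
    finally show ?thesis .
  qed
  have md2: "(norm md)\<^sup>2 \<le> (\<Sum>i<n. (norm (dl w t i))\<^sup>2) / n"
  proof -
    have "(norm md)\<^sup>2 = (norm (\<Sum>i<n. dl w t i))\<^sup>2 / (real n)\<^sup>2"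
      using n_real by (simp add: md_def power_divide)
    also have "\<dots> \<le> (real n * (\<Sum>i<n. (norm (dl w t i))\<^sup>2)) / (real n)\<^sup>2"
      using norm_sum_sq[of "{..<n}" "dl w t"] by (intro divide_right_mono) auto
    finally show ?thesis using n_real by (simp add: power2_eq_square)
  qed
  have zmd: "- 2 * (z \<bullet> md) = (\<Sum>i<n. - 2 * (z \<bullet> dl w t i)) / n"
  proof -
    have zm: "z \<bullet> md = (\<Sum>i<n. z \<bullet> dl w t i) / n" by (simp add: md_def inner_sum_right)
    have "(\<Sum>i<n. - 2 * (z \<bullet> dl w t i)) = - 2 * (\<Sum>i<n. z \<bullet> dl w t i)"
      by (rule sum_distrib_left[symmetric])
    thus ?thesis using zm by simp
  qed
  have sp: "(\<Sum>i<n. - 2 * (z \<bullet> dl w t i) + (norm (dl w t i))\<^sup>2) / n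
     = (\<Sum>i<n. - 2 * (z \<bullet> dl w t i)) / n + (\<Sum>i<n. (norm (dl w t i))\<^sup>2) / n"
    by (simp only: sum.distrib add_divide_distrib)
  have e1: "ee w (Suc t) \<le> (norm z)\<^sup>2 + (\<Sum>i<n. - 2 * (z \<bullet> dl w t i) + (norm (dl w t i))\<^sup>2) / n"
    using eq1 md2 zmd sp by linarith
  have "(\<Sum>i<n. - 2 * (z \<bullet> dl w t i) + (norm (dl w t i))\<^sup>2)
     \<le> (\<Sum>i<n. - AA w t i + 2 * gb * BB w t i - alpha * mu * (norm (xstar - xx w t i))\<^sup>2 + (norm (xb w t - xx w t i))\<^sup>2)"
  proof (rule sum_mono)
    fix i assume "i \<in> {..<n}"
    hence gi: "good i (w (t, i))" using good by auto
    note ff = AA_facts[where w=w and t=t and i=i, OF gi]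
    have "AA w t i / c \<le> AA w t i / 2" by (rule divide_left_mono) (use ff c2 in auto)
    hence "2 * (norm (dl w t i))\<^sup>2 \<le> AA w t i" using ff by linarith
    thus "- 2 * (z \<bullet> dl w t i) + (norm (dl w t i))\<^sup>2 \<le> - AA w t i + 2 * gb * BB w t i - alpha * mu * (norm (xstar - xx w t i))\<^sup>2 + (norm (xb w t - xx w t i))\<^sup>2"
      using per_client[where w=w and t=t and i=i, OF gi] by (simp add: z_def)
  qed
  also have "\<dots> = - (\<Sum>i<n. AA w t i) + 2 * gb * (\<Sum>i<n. BB w t i) - alpha * mu * (\<Sum>i<n. (norm (xstar - xx w t i))\<^sup>2)
       + (\<Sum>i<n. (norm (xb w t - xx w t i))\<^sup>2)"
    by (simp add: sum.distrib sum_subtractf sum_distrib_left sum_negf)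
  also have "\<dots> \<le> - (\<Sum>i<n. AA w t i) + 2 * gb * (\<Sum>i<n. BB w t i) - alpha * mu * (real n * (norm z)\<^sup>2)
       + (\<Sum>i<n. (norm (xb w t - xx w t i))\<^sup>2)"
  proof -
    have "0 \<in> {..<n}" using n_pos by simp
    hence ne: "{..<n} \<noteq> {}" by blast
    have "(\<Sum>i<n. (norm (xstar - xx w t i))\<^sup>2) = (\<Sum>i<n. (norm (xb w t - xx w t i))\<^sup>2) + real n * (norm (xstar - xb w t))\<^sup>2"
      using var_decomp[OF finite_lessThan ne, of xstar "xx w t"] by (simp add: fedsps_avg_def)
    hence "real n * (norm z)\<^sup>2 \<le> (\<Sum>i<n. (norm (xstar - xx w t i))\<^sup>2)"
      by (simp add: z_def norm_minus_commute sum_nonneg)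
    moreover have "0 \<le> alpha * mu" using mu_nonneg gb_pos c_pos L_nonneg by (simp add: alpha_def)
    ultimately show ?thesis by (simp add: mult_left_mono)
  qed
  finally have "(\<Sum>i<n. - 2 * (z \<bullet> dl w t i) + (norm (dl w t i))\<^sup>2) / n
     \<le> (- (\<Sum>i<n. AA w t i) + 2 * gb * (\<Sum>i<n. BB w t i) - alpha * mu * (real n * (norm z)\<^sup>2)
       + (\<Sum>i<n. (norm (xb w t - xx w t i))\<^sup>2)) / n"
    using n_real by (intro divide_right_mono) auto
  also have "\<dots> = - Ab w t + 2 * gb * Bb w t - mu * alpha * (norm z)\<^sup>2 + RR w t"
    using n_real by (simp add: Ab_def Bb_def RR_def field_simps)
  finally show ?thesis using e1 by (simp add: ee_def z_def algebra_simps)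
qed

end


context fed begin

lemma count_gen:
  fixes f v wt :: "nat \<Rightarrow> real"
  assumes f: "\<And>k. 0 \<le> f k" and v: "\<And>k. 0 \<le> v k"
    and w: "\<And>t k. t < T \<Longrightarrow> sb t \<le> k \<Longrightarrow> k < t \<Longrightarrow> 0 \<le> wt t \<and> wt t \<le> v k"
  shows "(\<Sum>t<T. wt t * (\<Sum>k\<in>{sb t..<t}. f k)) \<le> tau * (\<Sum>k<T. v k * f k)"
proof -
  have "(\<Sum>t<T. wt t * (\<Sum>k\<in>{sb t..<t}. f k)) = (\<Sum>t<T. \<Sum>k<T. if sb t \<le> k \<and> k < t then wt t * f k else 0)"
  proof (rule sum.cong[OF refl])
    fix t assume t: "t \<in> {..<T}"
    have se: "{sb t..<t} = {k \<in> {..<T}. sb t \<le> k \<and> k < t}" using t by auto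
    have "wt t * (\<Sum>k\<in>{sb t..<t}. f k) = (\<Sum>k\<in>{sb t..<t}. wt t * f k)" by (simp add: sum_distrib_left)
    also have "\<dots> = (\<Sum>k\<in>{k \<in> {..<T}. sb t \<le> k \<and> k < t}. wt t * f k)" by (simp only: se)
    also have "\<dots> = (\<Sum>k<T. if sb t \<le> k \<and> k < t then wt t * f k else 0)" by (rule sum.inter_filter) simp
    finally show "wt t * (\<Sum>k\<in>{sb t..<t}. f k) = (\<Sum>k<T. if sb t \<le> k \<and> k < t then wt t * f k else 0)" .
  qed
  also have "\<dots> \<le> (\<Sum>t<T. \<Sum>k<T. if sb t \<le> k \<and> k < t then v k * f k else 0)"
    using w f by (intro sum_mono) (auto intro: mult_right_mono)
  also have "\<dots> = (\<Sum>k<T. \<Sum>t<T. if sb t \<le> k \<and> k < t then v k * f k else 0)"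
    by (rule sum.swap)
  also have "\<dots> \<le> (\<Sum>k<T. tau * (v k * f k))"
  proof (rule sum_mono)
    fix k assume "k \<in> {..<T}"
    have "(\<Sum>t<T. if sb t \<le> k \<and> k < t then v k * f k else 0) = real (card ({..<T} \<inter> {t. sb t \<le> k \<and> k < t})) * (v k * f k)"
      by (simp add: sum.If_cases)
    also have "card ({..<T} \<inter> {t. sb t \<le> k \<and> k < t}) \<le> tau"
    proof -
      have "{..<T} \<inter> {t. sb t \<le> k \<and> k < t} \<subseteq> {k<..<k + tau}"
      proof
        fix x assume "x \<in> {..<T} \<inter> {t. sb t \<le> k \<and> k < t}"
        hence "sb x \<le> k" "k < x" by auto
        moreover have "x < sb x + tau" by (rule sb_gt)
        ultimately show "x \<in> {k<..<k + tau}" by simp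
      qed
      hence "card ({..<T} \<inter> {t. sb t \<le> k \<and> k < t}) \<le> card {k<..<k + tau}" by (intro card_mono) auto
      thus ?thesis by simp
    qed
    hence "real (card ({..<T} \<inter> {t. sb t \<le> k \<and> k < t})) * (v k * f k) \<le> tau * (v k * f k)"
      using f v by (intro mult_right_mono) auto
    finally show "(\<Sum>t<T. if sb t \<le> k \<and> k < t then v k * f k else 0) \<le> tau * (v k * f k)" .
  qed
  finally show ?thesis by (simp add: sum_distrib_left)
qed

lemma Ab_nonneg: "(\<And>i. i < n \<Longrightarrow> good i (w (t, i))) \<Longrightarrow> 0 \<le> Ab w t"
  unfolding Ab_def by (intro divide_nonneg_nonneg sum_nonneg) (auto intro: AA_facts(1))
lemma Bb_nonneg:
  assumes "\<And>i. i < n \<Longrightarrow> good i (w (t, i))" shows "0 \<le> Bb w t"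
  unfolding Bb_def
proof (intro divide_nonneg_nonneg sum_nonneg)
  fix i assume "i \<in> {..<n}"
  thus "0 \<le> BB w t i" using assms by (simp add: BB_def good_def)
qed simp

lemma alpha_pos: "alpha > 0" using gb_pos c_pos L_nonneg by (simp add: alpha_def)

lemma path_a:
  assumes good: "\<And>t i. t < T \<Longrightarrow> i < n \<Longrightarrow> good i (w (t, i))" and c2: "c \<ge> 2 * (real tau)\<^sup>2"
  shows "(\<Sum>t<T. Ab w t) / 2 \<le> ee w 0 + 2 * gb * (\<Sum>t<T. Bb w t)"
proof -
  have "1 \<le> real tau" using tau_pos by simp
  hence "1 \<le> (real tau)\<^sup>2" by (rule one_le_power)
  hence c2': "c \<ge> 2" using c2 by linarith
  have ma: "0 \<le> mu * alpha" using mu_nonneg alpha_pos by simp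
  have st: "ee w (Suc t) - ee w t \<le> - Ab w t + 2 * gb * Bb w t + RR w t" if "t < T" for t
  proof -
    have "ee w (Suc t) \<le> (1 - mu * alpha) * ee w t - Ab w t + 2 * gb * Bb w t + RR w t"
      using step_ineq[OF good c2'] that by auto
    moreover have "(1 - mu * alpha) * ee w t \<le> ee w t"
    proof -
      have h: "0 \<le> (mu * alpha) * ee w t" by (rule mult_nonneg_nonneg[OF ma]) (simp add: ee_def)
      have "(1 - mu * alpha) * ee w t = ee w t - (mu * alpha) * ee w t" by (simp add: left_diff_distrib)
      thus ?thesis using h by linarith
    qed
    ultimately show ?thesis by linarith
  qed
  have "ee w T - ee w 0 = (\<Sum>t<T. ee w (Suc t) - ee w t)" by (rule sum_lessThan_telescope[symmetric])
  also have "\<dots> \<le> (\<Sum>t<T. - Ab w t + 2 * gb * Bb w t + RR w t)" using st by (intro sum_mono) auto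
  also have "\<dots> = - (\<Sum>t<T. Ab w t) + 2 * gb * (\<Sum>t<T. Bb w t) + (\<Sum>t<T. RR w t)"
    by (simp add: sum.distrib sum_subtractf sum_negf sum_distrib_left)
  also have "(\<Sum>t<T. RR w t) \<le> (\<Sum>t<T. 1 * ((tau / c) * (\<Sum>k\<in>{sb t..<t}. Ab w k)))"
    using R_bound good by (intro sum_mono) auto
  also have "\<dots> = (tau / c) * (\<Sum>t<T. 1 * (\<Sum>k\<in>{sb t..<t}. (if k < T then Ab w k else 0)))"
    using sb_le by (simp add: sum_distrib_left)
  also have "\<dots> \<le> (tau / c) * (tau * (\<Sum>k<T. 1 * (if k < T then Ab w k else 0)))"
    using c_pos Ab_nonneg good
    by (intro mult_left_mono count_gen) auto
  also have "\<dots> = (real tau)\<^sup>2 / c * (\<Sum>k<T. Ab w k)" by (simp add: power2_eq_square)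
  also have "\<dots> \<le> 1 / 2 * (\<Sum>k<T. Ab w k)"
  proof (rule mult_right_mono)
    show "(real tau)\<^sup>2 / c \<le> 1 / 2" using c2 c_pos by (simp add: field_simps)
    show "0 \<le> (\<Sum>k<T. Ab w k)" using Ab_nonneg good by (intro sum_nonneg) auto
  qed
  finally have "ee w T - ee w 0 \<le> - (\<Sum>t<T. Ab w t) + 2 * gb * (\<Sum>t<T. Bb w t) + 1 / 2 * (\<Sum>k<T. Ab w k)"
    by simp
  moreover have "0 \<le> ee w T" by (simp add: ee_def)
  ultimately show ?thesis by simp
qed

lemma unroll:
  assumes good: "\<And>t i. t < T \<Longrightarrow> i < n \<Longrightarrow> good i (w (t, i))" and c2: "c \<ge> 2"
    and q: "q = 1 - mu * alpha" "0 \<le> q"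
  shows "ee w T \<le> q ^ T * ee w 0 + (\<Sum>t<T. q ^ (T - 1 - t) * (- Ab w t + 2 * gb * Bb w t + RR w t))"
  using good
proof (induction T)
  case 0 thus ?case by simp
next
  case (Suc T)
  define X where "X t = - Ab w t + 2 * gb * Bb w t + RR w t" for t
  define S where "S = (\<Sum>t<T. q ^ (T - 1 - t) * X t)"
  have ih: "ee w T \<le> q ^ T * ee w 0 + S"
    unfolding S_def X_def using Suc by auto
  have eqS: "q * S = (\<Sum>t<T. q ^ (T - t) * X t)"
    unfolding S_def sum_distrib_left
  proof (intro sum.cong refl)
    fix t assume "t \<in> {..<T}"
    hence "T - t = Suc (T - 1 - t)" by auto
    thus "q * (q ^ (T - 1 - t) * X t) = q ^ (T - t) * X t" by simp
  qed
  have "ee w (Suc T) \<le> q * ee w T + X T"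
    using step_ineq[OF _ c2, of w T] Suc.prems q by (auto simp: X_def)
  also have "\<dots> \<le> q * (q ^ T * ee w 0 + S) + X T"
    using ih q by (intro add_right_mono mult_left_mono) auto
  also have "\<dots> = q ^ Suc T * ee w 0 + (\<Sum>t<Suc T. q ^ (Suc T - 1 - t) * X t)"
    by (simp add: distrib_left eqS mult.assoc)
  finally show ?case by (simp add: X_def)
qed

end


context fed begin

lemma path_b:
  assumes good: "\<And>t i. t < T \<Longrightarrow> i < n \<Longrightarrow> good i (w (t, i))" and c4: "c \<ge> 4 * (real tau)\<^sup>2"
    and q: "q = 1 - mu * alpha" "0 \<le> q" and qh: "\<And>j. j \<le> tau \<Longrightarrow> 1 / 2 \<le> q ^ j"
  shows "ee w T \<le> q ^ T * ee w 0 + 2 * gb * (\<Sum>t<T. q ^ (T - 1 - t) * Bb w t)"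
proof -
  have "1 \<le> real tau" using tau_pos by simp
  hence "1 \<le> (real tau)\<^sup>2" by (rule one_le_power)
  hence c2: "c \<ge> 2" using c4 by linarith
  have "(\<Sum>t<T. q ^ (T - 1 - t) * RR w t) \<le> (\<Sum>t<T. q ^ (T - 1 - t) * ((tau / c) * (\<Sum>k\<in>{sb t..<t}. Ab w k)))"
    using R_bound good q by (intro sum_mono mult_left_mono) auto
  also have "\<dots> = (tau / c) * (\<Sum>t<T. q ^ (T - 1 - t) * (\<Sum>k\<in>{sb t..<t}. (if k < T then Ab w k else 0)))"
    using sb_le by (simp add: sum_distrib_left algebra_simps)
  also have "\<dots> \<le> (tau / c) * (tau * (\<Sum>k<T. (2 * q ^ (T - 1 - k)) * (if k < T then Ab w k else 0)))"
  proof (intro mult_left_mono count_gen)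
    fix t k assume tk: "t < T" "sb t \<le> k" "k < t"
    have "q ^ (T - 1 - k) = q ^ (T - 1 - t) * q ^ (t - k)"
      using tk by (simp add: power_add[symmetric])
    moreover have "1 / 2 \<le> q ^ (t - k)" using qh tk sb_gt[of t] by auto
    moreover have "q ^ (T - 1 - t) * (1 / 2) \<le> q ^ (T - 1 - t) * q ^ (t - k)"
      by (rule mult_left_mono) (use \<open>1 / 2 \<le> q ^ (t - k)\<close> q in auto)
    ultimately show "0 \<le> q ^ (T - 1 - t) \<and> q ^ (T - 1 - t) \<le> 2 * q ^ (T - 1 - k)"
      using q by auto
  qed (use c_pos Ab_nonneg good q in auto)
  also have "\<dots> = (2 * (real tau)\<^sup>2 / c) * (\<Sum>k<T. q ^ (T - 1 - k) * Ab w k)"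
    by (simp add: power2_eq_square sum_distrib_left algebra_simps)
  also have "\<dots> \<le> 1 * (\<Sum>k<T. q ^ (T - 1 - k) * Ab w k)"
  proof (rule mult_right_mono)
    show "2 * (real tau)\<^sup>2 / c \<le> 1" using c4 c_pos by (simp add: field_simps)
    show "0 \<le> (\<Sum>k<T. q ^ (T - 1 - k) * Ab w k)" using Ab_nonneg good q by (intro sum_nonneg) auto
  qed
  finally have RA: "(\<Sum>t<T. q ^ (T - 1 - t) * RR w t) \<le> (\<Sum>k<T. q ^ (T - 1 - k) * Ab w k)" by simp
  have "ee w T \<le> q ^ T * ee w 0 + (\<Sum>t<T. q ^ (T - 1 - t) * (- Ab w t + 2 * gb * Bb w t + RR w t))"
    by (rule unroll[OF good c2 q]) auto
  also have "(\<Sum>t<T. q ^ (T - 1 - t) * (- Ab w t + 2 * gb * Bb w t + RR w t))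
      = - (\<Sum>t<T. q ^ (T - 1 - t) * Ab w t) + 2 * gb * (\<Sum>t<T. q ^ (T - 1 - t) * Bb w t) + (\<Sum>t<T. q ^ (T - 1 - t) * RR w t)"
    by (simp add: algebra_simps sum.distrib sum_subtractf sum_distrib_left)
  finally show ?thesis using RA by simp
qed

lemma mu_le_L:
  assumes "good i \<xi>"
  shows "mu \<le> L"
proof -
  obtain b :: 'v where b: "b \<in> Basis" using nonempty_Basis by blast
  hence nb: "norm b = 1" by simp
  have der: "\<And>x. ((\<lambda>z. F i z \<xi>) has_derivative (\<lambda>h. G i x \<xi> \<bullet> h)) (at x)"
    and lip: "\<And>x y. norm (G i y \<xi> - G i x \<xi>) \<le> L * norm (x - y)"
    and cv: "\<And>x y. F i y \<xi> \<ge> F i x \<xi> + G i x \<xi> \<bullet> (y - x) + mu / 2 * (norm (y - x))\<^sup>2"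
    using assms by (auto simp: good_def)
  have "F i b \<xi> \<le> F i 0 \<xi> + G i 0 \<xi> \<bullet> (b - 0) + L / 2 * (norm (b - 0))\<^sup>2"
    by (rule descent[where f="\<lambda>z. F i z \<xi>" and g="\<lambda>x. G i x \<xi>", OF der lip])
  moreover have "F i b \<xi> \<ge> F i 0 \<xi> + G i 0 \<xi> \<bullet> (b - 0) + mu / 2 * (norm (b - 0))\<^sup>2" by (rule cv)
  ultimately show ?thesis using nb by simp
qed

lemma geom_sum:
  fixes q :: real
  shows "(1 - q) * (\<Sum>j<T. q ^ j) = 1 - q ^ T"
proof (induction T)
  case 0 show ?case by simp
next
  case (Suc T)
  have "(1 - q) * (\<Sum>j<Suc T. q ^ j) = (1 - q) * (\<Sum>j<T. q ^ j) + (1 - q) * q ^ T"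
    by (simp add: distrib_left)
  also have "\<dots> = 1 - q ^ T + (1 - q) * q ^ T" by (simp only: Suc.IH)
  also have "\<dots> = 1 - q ^ Suc T" by (simp add: algebra_simps)
  finally show ?case .
qed

end



lemma sps_meas:
  fixes g :: "'b \<Rightarrow> 'v::euclidean_space"
  assumes [measurable]: "a \<in> borel_measurable M" "g \<in> borel_measurable M"
  shows "(\<lambda>w. sps_step c gb (a w) l (g w)) \<in> borel_measurable M"
  unfolding sps_step_def by measurable

context fed begin

lemma dep: "(\<And>k j. k < t \<Longrightarrow> w (k, j) = w' (k, j)) \<Longrightarrow> xx w t = xx w' t"
proof (induction t)
  case 0 thus ?case by simp
next
  case (Suc t)
  have "xx w t = xx w' t" using Suc by auto
  moreover have "\<And>j. w (t, j) = w' (t, j)" using Suc.prems by auto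
  ultimately show ?case by (simp add: Let_def)
qed

end

locale fedm = fed +
  assumes prob: "\<And>i. i < n \<Longrightarrow> prob_space (D i)"
    and meas_F: "\<And>i. i < n \<Longrightarrow> (\<lambda>(x, \<xi>). F i x \<xi>) \<in> borel_measurable (borel \<Otimes>\<^sub>M D i)"
    and meas_G: "\<And>i. i < n \<Longrightarrow> (\<lambda>(x, \<xi>). G i x \<xi>) \<in> borel_measurable (borel \<Otimes>\<^sub>M D i)"
    and int_F: "\<And>i x. i < n \<Longrightarrow> integrable (D i) (F i x)"
    and AEgood: "\<And>i. i < n \<Longrightarrow> AE \<xi> in D i. good i \<xi>"
    and grad_f: "\<And>i x. i < n \<Longrightarrow> (loc_obj F D i has_derivative (\<lambda>h. (\<integral>\<xi>. G i x \<xi> \<partial>D i) \<bullet> h)) (at x)"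
begin

definition "D' i = (if i < n then D i else return (count_space UNIV) undefined)"
definition MM :: "nat \<times> nat \<Rightarrow> 'a measure" where "MM p = D' (snd p)"
definition II :: "nat \<Rightarrow> (nat \<times> nat) set" where "II T = {..<T} \<times> {..<n}"
definition PP :: "nat \<Rightarrow> (nat \<times> nat \<Rightarrow> 'a) measure" where "PP T = PiM (II T) MM"

lemma prob_MM: "prob_space (MM p)"
  using prob by (auto simp: MM_def D'_def intro: prob_space_return)

lemma MM_eq: "i < n \<Longrightarrow> MM (t, i) = D i" by (simp add: MM_def D'_def)

lemma pps: "product_prob_space MM"
  unfolding product_prob_space_def product_prob_space_axioms_def product_sigma_finite_def
  using prob_MM prob_space_imp_sigma_finite by blast

lemma sample_eq: "sample_space D n T = PP T"
  unfolding sample_space_def PP_def II_def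
  by (rule PiM_cong) (auto simp: MM_def D'_def)

lemma PP_prob: "prob_space (PP T)"
  unfolding PP_def
  by (rule prob_space_PiM) (use prob_MM in auto)

lemma comp_meas: "t < T \<Longrightarrow> i < n \<Longrightarrow> (\<lambda>w. w (t, i)) \<in> measurable (PP T) (D i)"
  using measurable_component_singleton[of "(t, i)" "II T" MM]
  by (simp add: PP_def II_def MM_eq)

lemma AE_comp:
  assumes "t < T" "i < n" "AE \<xi> in D i. P \<xi>"
  shows "AE w in PP T. P (w (t, i))"
proof -
  have "MM (t, i) = D i" using assms(2) by (rule MM_eq)
  hence "AE \<xi> in MM (t, i). P \<xi>" using assms(3) by metis
  moreover have "(t, i) \<in> II T" using assms by (simp add: II_def)
  ultimately show ?thesis unfolding PP_def by (intro AE_PiM_component prob_MM) auto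
qed

lemma AE_good: "AE w in PP T. \<forall>t<T. \<forall>i<n. good i (w (t, i))"
proof -
  have "AE w in PP T. \<forall>p\<in>II T. good (snd p) (w p)"
  proof (rule eventually_ball_finite)
    show "finite (II T)" unfolding II_def by (intro finite_cartesian_product finite_lessThan)
    show "\<forall>p\<in>II T. AE w in PP T. good (snd p) (w p)"
      by (auto simp: II_def intro!: AE_comp AEgood)
  qed
  thus ?thesis by eventually_elim (auto simp: II_def)
qed

lemma integral_comp:
  fixes f :: "'a \<Rightarrow> real"
  assumes "t < T" "i < n" "f \<in> borel_measurable (D i)"
  shows "(\<integral>w. f (w (t, i)) \<partial>PP T) = (\<integral>\<xi>. f \<xi> \<partial>D i)"
    and "integrable (D i) f \<Longrightarrow> integrable (PP T) (\<lambda>w. f (w (t, i)))"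
proof -
  have d: "distr (PP T) (D i) (\<lambda>w. w (t, i)) = D i"
  proof -
    have "distr (PiM (II T) MM) (MM (t, i)) (\<lambda>\<omega>. \<omega> (t, i)) = MM (t, i)"
      by (rule distr_PiM_component) (use prob_MM assms in \<open>auto simp: II_def\<close>)
    thus ?thesis using assms by (simp add: PP_def MM_eq)
  qed
  show "(\<integral>w. f (w (t, i)) \<partial>PP T) = (\<integral>\<xi>. f \<xi> \<partial>D i)"
    using integral_distr[OF comp_meas[OF assms(1,2)] assms(3)] d by simp
  show "integrable (D i) f \<Longrightarrow> integrable (PP T) (\<lambda>w. f (w (t, i)))"
    using integrable_distr_eq[OF comp_meas[OF assms(1,2)] assms(3)] d by simp
qed

lemma meas_xx: "t \<le> T \<Longrightarrow> i < n \<Longrightarrow> (\<lambda>w. xx w t i) \<in> borel_measurable (PP T)"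
proof (induction t arbitrary: i)
  case 0 thus ?case by simp
next
  case (Suc t)
  have mdl: "(\<lambda>w. dl w t j) \<in> borel_measurable (PP T)" if j: "j < n" for j
  proof -
    have pr: "(\<lambda>w. (xx w t j, w (t, j))) \<in> measurable (PP T) (borel \<Otimes>\<^sub>M D j)"
      using Suc j by (intro measurable_Pair comp_meas) auto
    have mF: "(\<lambda>w. F j (xx w t j) (w (t, j))) \<in> borel_measurable (PP T)"
      using measurable_compose[OF pr meas_F[OF j]] by simp
    have mG: "(\<lambda>w. G j (xx w t j) (w (t, j))) \<in> borel_measurable (PP T)"
      using measurable_compose[OF pr meas_G[OF j]] by simp
    have "(\<lambda>w. gam w t j) \<in> borel_measurable (PP T)"
      unfolding gam_def by (rule sps_meas[OF mF mG])
    thus ?thesis unfolding dl_def using mG by (rule borel_measurable_scaleR)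
  qed
  have mx: "(\<lambda>w. xx w t j) \<in> borel_measurable (PP T)" if "j < n" for j
    using Suc that by auto
  show ?case
  proof (cases "tau dvd Suc t")
    case True
    have "(\<lambda>w. (1 / real n) *\<^sub>R (\<Sum>j<n. xx w t j - dl w t j)) \<in> borel_measurable (PP T)"
      using mx mdl by (intro borel_measurable_scaleR borel_measurable_const borel_measurable_sum borel_measurable_diff) auto
    thus ?thesis using True by (simp add: x_suc del: fedsps.simps)
  next
    case False
    have "(\<lambda>w. xx w t i - dl w t i) \<in> borel_measurable (PP T)"
      using mx mdl Suc.prems by (intro borel_measurable_diff) auto
    thus ?thesis using False by (simp add: x_suc del: fedsps.simps)
  qed
qed

lemma loc_cont: assumes i: "i < n" shows "loc_obj F D i \<in> borel_measurable borel"
  by (intro borel_measurable_continuous_onI continuous_at_imp_continuous_on ballI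
      has_derivative_continuous[OF grad_f[OF i]])

lemma loc_low: "i < n \<Longrightarrow> l i \<le> loc_obj F D i p"
proof -
  assume i: "i < n"
  interpret prob_space "D i" using prob[OF i] .
  have "(\<integral>\<xi>. l i \<partial>D i) \<le> (\<integral>\<xi>. F i p \<xi> \<partial>D i)"
    using AEgood[OF i] int_F[OF i] by (intro integral_mono_AE) (auto simp: good_def elim: AE_mp)
  thus ?thesis by (simp add: loc_obj_def prob_space)
qed

lemma loc_eq: "i < n \<Longrightarrow> (\<integral>\<^sup>+\<xi>. ennreal (F i p \<xi> - l i) \<partial>D i) = ennreal (loc_obj F D i p - l i)"
proof -
  assume i: "i < n"
  interpret prob_space "D i" using prob[OF i] .
  have int: "integrable (D i) (\<lambda>\<xi>. F i p \<xi> - l i)" using int_F[OF i] by auto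
  have "(\<integral>\<^sup>+\<xi>. ennreal (F i p \<xi> - l i) \<partial>D i) = ennreal (\<integral>\<xi>. F i p \<xi> - l i \<partial>D i)"
    by (rule nn_integral_eq_integral[OF int]) (use AEgood[OF i] in \<open>auto simp: good_def elim: AE_mp\<close>)
  also have "(\<integral>\<xi>. F i p \<xi> - l i \<partial>D i) = loc_obj F D i p - l i"
    using int_F[OF i] by (simp add: loc_obj_def prob_space)
  finally show ?thesis .
qed

end


context fedm begin

definition "sig2 = (\<Sum>i<n. loc_obj F D i xstar - l i) / n"
definition "e0 = (norm (x0 - xstar))\<^sup>2"

lemma sig2_nonneg: "0 \<le> sig2"
  unfolding sig2_def using loc_low by (intro divide_nonneg_nonneg sum_nonneg) auto

lemma ee0: "ee w 0 = e0"
proof -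
  have "xb w 0 = x0" using n_real by (simp add: fedsps_avg_def sum_constant_scaleR)
  thus ?thesis by (simp add: ee_def e0_def)
qed

lemma good_exists: "i < n \<Longrightarrow> \<exists>\<xi>. good i \<xi>"
proof (rule ccontr)
  assume i: "i < n" and ne: "\<not> (\<exists>\<xi>. good i \<xi>)"
  interpret prob_space "D i" using prob[OF i] .
  have "AE \<xi> in D i. False" using AEgood[OF i] ne by auto
  thus False by (simp add: AE_False)
qed

lemma meas_Fc: "t < T \<Longrightarrow> i < n \<Longrightarrow> (\<lambda>w. F i (xx w t i) (w (t, i))) \<in> borel_measurable (PP T)"
proof -
  assume t: "t < T" and i: "i < n"
  have pr: "(\<lambda>w. (xx w t i, w (t, i))) \<in> measurable (PP T) (borel \<Otimes>\<^sub>M D i)"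
    using t i meas_xx by (intro measurable_Pair comp_meas) auto
  show ?thesis using measurable_compose[OF pr meas_F[OF i]] by simp
qed

lemma Bb_int:
  assumes t: "t < T"
  shows "integrable (PP T) (\<lambda>w. Bb w t)" "(\<integral>w. Bb w t \<partial>PP T) = sig2"
proof -
  have ii: "integrable (D i) (\<lambda>\<xi>. F i xstar \<xi> - l i)" if "i < n" for i
  proof -
    interpret prob_space "D i" using prob[OF that] .
    show ?thesis using int_F[OF that] by auto
  qed
  have mi: "(\<lambda>\<xi>. F i xstar \<xi> - l i) \<in> borel_measurable (D i)" if "i < n" for i
    using ii[OF that] by (rule borel_measurable_integrable)
  have ic: "integrable (PP T) (\<lambda>w. F i xstar (w (t, i)) - l i)" if "i < n" for i
    using integral_comp(2)[OF t that mi[OF that] ii[OF that]] by simp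
  show "integrable (PP T) (\<lambda>w. Bb w t)"
    unfolding Bb_def BB_def using ic by (intro integrable_divide Bochner_Integration.integrable_sum) auto
  have "(\<integral>w. Bb w t \<partial>PP T) = (\<Sum>i<n. (\<integral>w. F i xstar (w (t, i)) - l i \<partial>PP T)) / n"
    unfolding Bb_def BB_def using ic by (simp add: Bochner_Integration.integral_sum)
  also have "\<dots> = (\<Sum>i<n. loc_obj F D i xstar - l i) / n"
  proof -
    have "(\<integral>w. F i xstar (w (t, i)) - l i \<partial>PP T) = loc_obj F D i xstar - l i" if i: "i < n" for i
    proof -
      interpret prob_space "D i" using prob[OF i] .
      have "(\<integral>w. F i xstar (w (t, i)) - l i \<partial>PP T) = (\<integral>\<xi>. F i xstar \<xi> - l i \<partial>D i)"
        using integral_comp(1)[OF t i mi[OF i]] by simp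
      also have "\<dots> = loc_obj F D i xstar - l i" using int_F[OF i] by (simp add: loc_obj_def prob_space)
      finally show ?thesis .
    qed
    thus ?thesis by simp
  qed
  finally show "(\<integral>w. Bb w t \<partial>PP T) = sig2" by (simp add: sig2_def)
qed

lemma Bb_sum_int: "integrable (PP T) (\<lambda>w. \<Sum>t<T. cc t * Bb w t)"
proof (rule Bochner_Integration.integrable_sum)
  fix t assume "t \<in> {..<T}"
  hence "integrable (PP T) (\<lambda>w. Bb w t)" by (intro Bb_int(1)) auto
  thus "integrable (PP T) (\<lambda>w. cc t * Bb w t)" by simp
qed

lemma Bb_sum_val: "(\<integral>w. (\<Sum>t<T. cc t * Bb w t) \<partial>PP T) = (\<Sum>t<T. cc t * sig2)"
proof -
  have "(\<integral>w. (\<Sum>t<T. cc t * Bb w t) \<partial>PP T) = (\<Sum>t<T. (\<integral>w. cc t * Bb w t \<partial>PP T))"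
    by (rule Bochner_Integration.integral_sum) (use Bb_int(1) in auto)
  also have "\<dots> = (\<Sum>t<T. cc t * sig2)" using Bb_int(2) by (intro sum.cong refl) auto
  finally show ?thesis .
qed

lemma AE_Bb: "AE w in PP T. \<forall>t<T. 0 \<le> Bb w t"
  using AE_good[of T] by eventually_elim (auto intro: Bb_nonneg)

lemma partb:
  assumes mu: "mu > 0" and c4: "c \<ge> 4 * (real tau)\<^sup>2"
  shows "(\<integral>w. ee w T \<partial>PP T) \<le> 1 / (mu * alpha) * (1 - mu * alpha) ^ T * e0 + 2 * gb * sig2 / (alpha * mu)"
proof -
  interpret P: prob_space "PP T" by (rule PP_prob)
  obtain \<xi> where "good 0 \<xi>" using good_exists n_pos by auto
  hence muL: "mu \<le> L" by (rule mu_le_L)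
  hence Lp: "L > 0" using mu by simp
  define a where "a = mu * alpha"
  have al: "alpha \<le> 1 / (2 * c * L)" using Lp by (simp add: alpha_def)
  have ap: "0 < a" using mu alpha_pos by (simp add: a_def)
  have "a \<le> L * (1 / (2 * c * L))" unfolding a_def using muL al alpha_pos mu
    by (intro mult_mono) auto
  hence a2c: "a \<le> 1 / (2 * c)" using Lp by simp
  have "real tau * 1 \<le> real tau * real tau" by (rule mult_left_mono) (use tau_pos in auto)
  hence ctau: "real tau \<le> c" using c4 by (simp add: power2_eq_square)
  have c1: "c \<ge> 1" using ctau tau_pos by simp
  have ta: "real tau * a \<le> 1 / 2"
  proof -
    have "real tau * a \<le> real tau * (1 / (2 * c))" using a2c by (intro mult_left_mono) auto
    also have "\<dots> \<le> 1 / 2" using ctau c_pos by (simp add: field_simps)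
    finally show ?thesis .
  qed
  define q where "q = 1 - a"
  have "1 / (2 * c) \<le> 1 / 2" using c1 by (simp add: field_simps)
  hence a1: "a \<le> 1 / 2" using a2c by linarith
  have q0: "0 \<le> q" "q \<le> 1" using a1 ap by (auto simp: q_def)
  have qh: "1 / 2 \<le> q ^ j" if "j \<le> tau" for j
  proof -
    have "1 + real tau * (- a) \<le> (1 + - a) ^ tau" by (rule Bernoulli_inequality) (use a1 in auto)
    moreover have "q ^ tau \<le> q ^ j" using that q0 by (rule power_decreasing)
    ultimately show ?thesis using ta by (simp add: q_def)
  qed
  define h where "h w = q ^ T * e0 + 2 * gb * (\<Sum>t<T. q ^ (T - 1 - t) * Bb w t)" for w
  have AEle: "AE w in PP T. ee w T \<le> h w"
    using AE_good[of T] proof eventually_elim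
    case (elim w)
    show ?case using path_b[of T w q, OF _ c4 _ q0(1) qh] elim by (auto simp: h_def ee0 q_def a_def)
  qed
  have AEh: "AE w in PP T. 0 \<le> h w"
    using AE_Bb[of T] proof eventually_elim
    case (elim w)
    show ?case unfolding h_def using elim q0 sig2_nonneg gb_pos
      by (intro add_nonneg_nonneg mult_nonneg_nonneg sum_nonneg) (auto simp: e0_def)
  qed
  have hh: "h = (\<lambda>w. q ^ T * e0 + (\<Sum>t<T. (2 * gb * q ^ (T - 1 - t)) * Bb w t))"
    by (simp add: h_def fun_eq_iff sum_distrib_left mult.assoc)
  have hint: "integrable (PP T) h" unfolding hh
    using Bb_sum_int[of T "\<lambda>t. 2 * gb * q ^ (T - 1 - t)"] by simp
  have I1: "(\<integral>w. ee w T \<partial>PP T) \<le> (\<integral>w. h w \<partial>PP T)"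
    by (rule integral_mono_AE'[OF hint AEle AEh])
  have I2: "(\<integral>w. h w \<partial>PP T) = q ^ T * e0 + 2 * gb * (\<Sum>t<T. q ^ (T - 1 - t) * sig2)"
  proof -
    have "(\<integral>w. h w \<partial>PP T) = q ^ T * e0 + (\<integral>w. (\<Sum>t<T. (2 * gb * q ^ (T - 1 - t)) * Bb w t) \<partial>PP T)"
      unfolding hh using Bb_sum_int[of T "\<lambda>t. 2 * gb * q ^ (T - 1 - t)"]
      by (simp add: P.prob_space)
    also have "\<dots> = q ^ T * e0 + 2 * gb * (\<Sum>t<T. q ^ (T - 1 - t) * sig2)"
      by (subst Bb_sum_val) (simp add: sum_distrib_left mult.assoc)
    finally show ?thesis .
  qed
  have I3a: "(\<Sum>t<T. q ^ (T - 1 - t) * sig2) = (\<Sum>t<T. q ^ (T - 1 - t)) * sig2"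
    by (rule sum_distrib_right[symmetric])
  have I3b: "(\<Sum>t<T. q ^ (T - 1 - t)) = (\<Sum>j<T. q ^ j)"
  proof -
    have "(\<Sum>t<T. q ^ (T - 1 - t)) = (\<Sum>t<T. q ^ (T - Suc t))" by simp
    also have "\<dots> = (\<Sum>j<T. q ^ j)" by (rule sum.nat_diff_reindex)
    finally show ?thesis .
  qed
  have I4: "(\<Sum>j<T. q ^ j) \<le> 1 / a"
  proof -
    have "a * (\<Sum>j<T. q ^ j) = 1 - q ^ T" using geom_sum[of q T] by (simp add: q_def)
    also have "\<dots> \<le> 1" using q0 by simp
    finally show ?thesis using ap by (simp add: field_simps)
  qed
  have I5: "2 * gb * ((\<Sum>j<T. q ^ j) * sig2) \<le> 2 * gb * ((1 / a) * sig2)"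
    using I4 sig2_nonneg gb_pos by (intro mult_left_mono mult_right_mono) auto
  have I6: "q ^ T * e0 \<le> 1 / a * q ^ T * e0"
  proof -
    have "1 \<le> 1 / a" using ap a1 by (simp add: field_simps)
    moreover have "0 \<le> q ^ T * e0" using q0 by (simp add: e0_def)
    ultimately have "1 * (q ^ T * e0) \<le> (1 / a) * (q ^ T * e0)" by (rule mult_right_mono)
    thus ?thesis by (simp add: mult.assoc)
  qed
  have I7: "1 / (mu * alpha) * (1 - mu * alpha) ^ T * e0 + 2 * gb * sig2 / (alpha * mu)
      = 1 / a * q ^ T * e0 + 2 * gb * ((1 / a) * sig2)"
    by (simp add: a_def q_def mult.commute)
  have "(\<integral>w. ee w T \<partial>PP T) \<le> q ^ T * e0 + 2 * gb * ((\<Sum>j<T. q ^ j) * sig2)"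
    using I1 I2 I3a I3b by simp
  thus ?thesis using I5 I6 I7 by linarith
qed

end


context fedm begin

lemma indep:
  assumes t: "t < T" and i: "i < n"
  shows "(\<integral>\<^sup>+w. ennreal (F i (xx w t i) (w (t, i)) - l i) \<partial>PP T)
       = (\<integral>\<^sup>+w. ennreal (loc_obj F D i (xx w t i) - l i) \<partial>PP T)"
proof -
  interpret product_prob_space MM by (rule pps)
  define J where "J = II T - {(t, i)}"
  have IJ: "II T = insert (t, i) J" "finite J" "(t, i) \<notin> J"
    using t i by (auto simp: J_def II_def)
  have PP: "PP T = PiM (insert (t, i) J) MM" by (simp add: PP_def IJ(1)[symmetric])
  have mY: "(\<lambda>w. ennreal (F i (xx w t i) (w (t, i)) - l i)) \<in> borel_measurable (PiM (insert (t, i) J) MM)"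
    using meas_Fc[OF t i] unfolding PP by measurable
  have mx: "(\<lambda>w. xx w t i) \<in> borel_measurable (PiM (insert (t, i) J) MM)"
    using meas_xx[of t T i] t i unfolding PP by auto
  have mZ: "(\<lambda>w. ennreal (loc_obj F D i (xx w t i) - l i)) \<in> borel_measurable (PiM (insert (t, i) J) MM)"
    using measurable_compose[OF mx loc_cont[OF i]] by measurable
  have upd: "xx (w((t, i) := y)) t i = xx w t i" for w y
    by (rule fun_cong[OF dep]) auto
  have "(\<integral>\<^sup>+w. ennreal (F i (xx w t i) (w (t, i)) - l i) \<partial>PP T)
      = (\<integral>\<^sup>+w. (\<integral>\<^sup>+y. ennreal (F i (xx (w((t, i) := y)) t i) ((w((t, i) := y)) (t, i)) - l i) \<partial>MM (t, i)) \<partial>PiM J MM)"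
    unfolding PP by (rule product_nn_integral_insert[OF IJ(2,3) mY])
  also have "\<dots> = (\<integral>\<^sup>+w. ennreal (loc_obj F D i (xx w t i) - l i) \<partial>PiM J MM)"
    by (simp add: upd MM_eq[OF i] loc_eq[OF i])
  also have "\<dots> = (\<integral>\<^sup>+w. (\<integral>\<^sup>+y. ennreal (loc_obj F D i (xx (w((t, i) := y)) t i) - l i) \<partial>MM (t, i)) \<partial>PiM J MM)"
    by (simp add: upd prob_space.emeasure_space_1[OF prob_MM])
  also have "\<dots> = (\<integral>\<^sup>+w. ennreal (loc_obj F D i (xx w t i) - l i) \<partial>PP T)"
    unfolding PP by (rule product_nn_integral_insert[OF IJ(2,3) mZ, symmetric])
  finally show ?thesis .
qed

lemma parta:
  assumes c2: "c \<ge> 2 * (real tau)\<^sup>2" and T: "T \<ge> 1"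
  shows "(1 / (real T * real n)) * (\<Sum>t<T. \<Sum>i<n. \<integral>w. (loc_obj F D i (xx w t i) - loc_obj F D i xstar) \<partial>PP T)
     \<le> 2 / (real T * alpha) * e0 + 4 * gb * sig2 / alpha"
proof -
  interpret P: prob_space "PP T" by (rule PP_prob)
  define Y where "Y t i w = F i (xx w t i) (w (t, i)) - l i" for t i w
  define Z where "Z t i w = loc_obj F D i (xx w t i) - l i" for t i w
  define h where "h w = e0 + 2 * gb * (\<Sum>t<T. Bb w t)" for w
  define K where "K = 2 * real n / alpha"
  have Kp: "K > 0" using alpha_pos n_real by (simp add: K_def)
  have mY: "Y t i \<in> borel_measurable (PP T)" if "t < T" "i < n" for t i
    unfolding Y_def using meas_Fc[OF that] by measurable
  have mZ: "Z t i \<in> borel_measurable (PP T)" if "t < T" "i < n" for t i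
  proof -
    have "(\<lambda>w. xx w t i) \<in> borel_measurable (PP T)" using meas_xx[of t T i] that by auto
    from measurable_compose[OF this loc_cont[OF that(2)]] show ?thesis unfolding Z_def by measurable
  qed
  have hh: "h = (\<lambda>w. e0 + (\<Sum>t<T. (2 * gb) * Bb w t))"
    by (simp add: h_def fun_eq_iff sum_distrib_left)
  have hint: "integrable (PP T) h" unfolding hh
    using Bb_sum_int[of T "\<lambda>t. 2 * gb"] by simp
  have hval: "(\<integral>w. h w \<partial>PP T) = e0 + 2 * gb * (real T * sig2)"
  proof -
    have "(\<integral>w. h w \<partial>PP T) = e0 + (\<integral>w. (\<Sum>t<T. (2 * gb) * Bb w t) \<partial>PP T)"
      unfolding hh using Bb_sum_int[of T "\<lambda>t. 2 * gb"] by (simp add: P.prob_space)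
    also have "\<dots> = e0 + 2 * gb * (real T * sig2)" by (subst Bb_sum_val) simp
    finally show ?thesis .
  qed
  have AEY: "AE w in PP T. \<forall>t<T. \<forall>i<n. 0 \<le> Y t i w"
    using AE_good[of T] by eventually_elim (auto simp: Y_def good_def)
  have AEsum: "AE w in PP T. (\<Sum>t<T. \<Sum>i<n. Y t i w) \<le> K * h w"
    using AE_good[of T] proof eventually_elim
    case (elim w)
    have pa: "(\<Sum>t<T. Ab w t) / 2 \<le> ee w 0 + 2 * gb * (\<Sum>t<T. Bb w t)"
      using path_a[OF _ c2, of T w] elim by auto
    have "alpha / n * (\<Sum>i<n. Y t i w) \<le> Ab w t" if "t < T" for t
    proof -
      have "alpha * (\<Sum>i<n. Y t i w) = (\<Sum>i<n. alpha * Y t i w)" by (simp add: sum_distrib_left)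
      also have "\<dots> \<le> (\<Sum>i<n. AA w t i)"
      proof (rule sum_mono)
        fix i assume "i \<in> {..<n}"
        hence g: "good i (w (t, i))" using elim that by auto
        have "0 \<le> Y t i w" using g by (simp add: Y_def good_def)
        thus "alpha * Y t i w \<le> AA w t i"
          using AA_facts(6)[where w=w and t=t and i=i, OF g] by (simp add: AA_def Y_def mult_right_mono)
      qed
      finally have "alpha * (\<Sum>i<n. Y t i w) \<le> (\<Sum>i<n. AA w t i)" .
      hence "alpha * (\<Sum>i<n. Y t i w) / n \<le> (\<Sum>i<n. AA w t i) / n"
        by (rule divide_right_mono) (use n_real in simp)
      thus ?thesis by (simp add: Ab_def)
    qed
    hence s0: "(\<Sum>t<T. alpha / n * (\<Sum>i<n. Y t i w)) \<le> (\<Sum>t<T. Ab w t)" by (intro sum_mono) auto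
    have eqn: "(\<Sum>t<T. alpha / n * (\<Sum>i<n. Y t i w)) = alpha / n * (\<Sum>t<T. \<Sum>i<n. Y t i w)"
      by (rule sum_distrib_left[symmetric])
    have sAb: "alpha / n * (\<Sum>t<T. \<Sum>i<n. Y t i w) \<le> (\<Sum>t<T. Ab w t)" using s0 eqn by linarith
    have pa': "(\<Sum>t<T. Ab w t) / 2 \<le> e0 + 2 * gb * (\<Sum>t<T. Bb w t)" using pa unfolding ee0 .
    define S where "S = (\<Sum>t<T. \<Sum>i<n. Y t i w)"
    have an: "alpha / real n > 0" using alpha_pos n_real by simp
    have "2 * ((\<Sum>t<T. Ab w t) / 2) \<le> 2 * (e0 + 2 * gb * (\<Sum>t<T. Bb w t))"
      using pa' by (rule mult_left_mono) simp
    hence "(\<Sum>t<T. Ab w t) \<le> 2 * h w" unfolding h_def by simp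
    with sAb have "alpha / n * S \<le> 2 * h w" unfolding S_def by (rule order_trans)
    hence "S * (alpha / n) \<le> 2 * h w" by (simp add: mult.commute)
    hence "S \<le> 2 * h w / (alpha / n)" using an by (subst pos_le_divide_eq[OF an])
    also have "2 * h w / (alpha / n) = K * h w" using an n_real by (simp add: K_def field_simps)
    finally show ?case by (simp add: S_def)
  qed
  have intY: "integrable (PP T) (Y t i)" if ti: "t < T" "i < n" for t i
  proof (rule Bochner_Integration.integrable_bound[where f="\<lambda>w. K * h w"])
    show "integrable (PP T) (\<lambda>w. K * h w)" using hint by auto
    show "Y t i \<in> borel_measurable (PP T)" by (rule mY[OF ti])
    show "AE w in PP T. norm (Y t i w) \<le> norm (K * h w)"
      using AEY AEsum proof eventually_elim
      case (elim w)
      have "Y t i w \<le> (\<Sum>i<n. Y t i w)" using elim ti by (intro member_le_sum) auto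
      also have "\<dots> \<le> (\<Sum>t<T. \<Sum>i<n. Y t i w)"
        using elim ti by (intro member_le_sum[of t "{..<T}" "\<lambda>t. \<Sum>i<n. Y t i w"] sum_nonneg) auto
      finally show ?case using elim ti by simp
    qed
  qed
  have YZ: "integrable (PP T) (Z t i) \<and> (\<integral>w. Z t i w \<partial>PP T) = (\<integral>w. Y t i w \<partial>PP T)" if ti: "t < T" "i < n" for t i
  proof -
    have AEYi: "AE w in PP T. 0 \<le> Y t i w" using AEY by eventually_elim (use ti in auto)
    have Z0: "0 \<le> Z t i w" for w using loc_low[OF ti(2)] by (simp add: Z_def)
    have "(\<integral>\<^sup>+w. ennreal (Z t i w) \<partial>PP T) = (\<integral>\<^sup>+w. ennreal (Y t i w) \<partial>PP T)"
      using indep[OF ti] by (simp add: Y_def Z_def)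
    also have "\<dots> = ennreal (\<integral>w. Y t i w \<partial>PP T)" by (rule nn_integral_eq_integral[OF intY[OF ti] AEYi])
    finally have eq: "(\<integral>\<^sup>+w. ennreal (Z t i w) \<partial>PP T) = ennreal (\<integral>w. Y t i w \<partial>PP T)" .
    have iZ: "integrable (PP T) (Z t i)"
      by (rule integrableI_nonneg[OF mZ[OF ti]]) (use Z0 eq in auto)
    have "ennreal (\<integral>w. Z t i w \<partial>PP T) = ennreal (\<integral>w. Y t i w \<partial>PP T)"
      using nn_integral_eq_integral[OF iZ] Z0 eq by simp
    moreover have "0 \<le> (\<integral>w. Z t i w \<partial>PP T)" "0 \<le> (\<integral>w. Y t i w \<partial>PP T)"
      using Z0 AEYi by (auto intro: integral_nonneg_AE)
    ultimately show ?thesis using iZ by simp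
  qed
  have "(\<Sum>t<T. \<Sum>i<n. \<integral>w. (loc_obj F D i (xx w t i) - loc_obj F D i xstar) \<partial>PP T)
      = (\<Sum>t<T. \<Sum>i<n. (\<integral>w. Y t i w \<partial>PP T) - (loc_obj F D i xstar - l i))"
  proof (intro sum.cong refl)
    fix t i assume ti: "t \<in> {..<T}" "i \<in> {..<n}"
    have "(\<lambda>w. loc_obj F D i (xx w t i) - loc_obj F D i xstar) = (\<lambda>w. Z t i w - (loc_obj F D i xstar - l i))"
      by (simp add: Z_def)
    hence "(\<integral>w. (loc_obj F D i (xx w t i) - loc_obj F D i xstar) \<partial>PP T) = (\<integral>w. Z t i w \<partial>PP T) - (loc_obj F D i xstar - l i)"
      using YZ ti by (simp add: integral_diff P.prob_space)
    thus "(\<integral>w. (loc_obj F D i (xx w t i) - loc_obj F D i xstar) \<partial>PP T) = (\<integral>w. Y t i w \<partial>PP T) - (loc_obj F D i xstar - l i)"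
      using YZ ti by simp
  qed
  also have "\<dots> = (\<Sum>t<T. \<Sum>i<n. \<integral>w. Y t i w \<partial>PP T) - real T * (real n * sig2)"
    using n_real by (simp add: sum_subtractf sig2_def)
  also have "\<dots> \<le> (\<Sum>t<T. \<Sum>i<n. \<integral>w. Y t i w \<partial>PP T)"
    using sig2_nonneg n_real by simp
  also have "\<dots> = (\<integral>w. (\<Sum>t<T. \<Sum>i<n. Y t i w) \<partial>PP T)"
  proof -
    have "(\<integral>w. (\<Sum>t<T. \<Sum>i<n. Y t i w) \<partial>PP T) = (\<Sum>t<T. \<integral>w. (\<Sum>i<n. Y t i w) \<partial>PP T)"
      by (rule Bochner_Integration.integral_sum) (auto intro!: Bochner_Integration.integrable_sum intY)
    also have "\<dots> = (\<Sum>t<T. \<Sum>i<n. \<integral>w. Y t i w \<partial>PP T)"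
      by (intro sum.cong refl Bochner_Integration.integral_sum) (auto intro!: intY)
    finally show ?thesis by simp
  qed
  also have "\<dots> \<le> (\<integral>w. K * h w \<partial>PP T)"
  proof (rule integral_mono_AE'[OF _ AEsum])
    show "integrable (PP T) (\<lambda>w. K * h w)" using hint by auto
    show "AE w in PP T. 0 \<le> K * h w"
      using AE_Bb[of T] proof eventually_elim
      case (elim w)
      have "0 \<le> (\<Sum>t<T. Bb w t)" using elim by (intro sum_nonneg) auto
      hence "0 \<le> h w" using gb_pos by (simp add: h_def e0_def)
      thus ?case using Kp by simp
    qed
  qed
  also have "\<dots> = K * (e0 + 2 * gb * (real T * sig2))" using hval by simp
  finally have main: "(\<Sum>t<T. \<Sum>i<n. \<integral>w. (loc_obj F D i (xx w t i) - loc_obj F D i xstar) \<partial>PP T)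
      \<le> K * (e0 + 2 * gb * (real T * sig2))" .
  have Tp: "real T > 0" using T by simp
  have "(1 / (real T * real n)) * (\<Sum>t<T. \<Sum>i<n. \<integral>w. (loc_obj F D i (xx w t i) - loc_obj F D i xstar) \<partial>PP T)
      \<le> (1 / (real T * real n)) * (K * (e0 + 2 * gb * (real T * sig2)))"
    using main Tp n_real by (intro mult_left_mono) auto
  also have "\<dots> = 2 / (real T * alpha) * e0 + 4 * gb * sig2 / alpha"
    using Tp n_real alpha_pos by (simp add: K_def field_simps)
  finally show ?thesis .
qed

end



theorem theorem1:
  fixes n tau :: nat
    and D :: "nat \<Rightarrow> 'a measure"
    and F :: "nat \<Rightarrow> 'v::euclidean_space \<Rightarrow> 'a \<Rightarrow> real"
    and G :: "nat \<Rightarrow> 'v \<Rightarrow> 'a \<Rightarrow> 'v"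
    and l :: "nat \<Rightarrow> real"
    and L mu c gb :: real
    and x0 xstar :: 'v
  assumes n_pos: "n \<ge> 1" and tau_pos: "tau \<ge> 1"
    and prob: "\<And>i. i < n \<Longrightarrow> prob_space (D i)"
    and meas_F: "\<And>i. i < n \<Longrightarrow> (\<lambda>(x, \<xi>). F i x \<xi>) \<in> borel_measurable (borel \<Otimes>\<^sub>M D i)"
    and meas_G: "\<And>i. i < n \<Longrightarrow> (\<lambda>(x, \<xi>). G i x \<xi>) \<in> borel_measurable (borel \<Otimes>\<^sub>M D i)"
    and int_F: "\<And>i x. i < n \<Longrightarrow> integrable (D i) (F i x)"
    and int_G: "\<And>i x. i < n \<Longrightarrow> integrable (D i) (G i x)"
    and grad_F: "\<And>i. i < n \<Longrightarrow> AE \<xi> in D i. \<forall>x.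
                    ((\<lambda>z. F i z \<xi>) has_derivative (\<lambda>h. G i x \<xi> \<bullet> h)) (at x)"
    and grad_f: "\<And>i x. i < n \<Longrightarrow>
                    (loc_obj F D i has_derivative (\<lambda>h. (\<integral>\<xi>. G i x \<xi> \<partial>D i) \<bullet> h)) (at x)"
    and lower: "\<And>i. i < n \<Longrightarrow> AE \<xi> in D i. \<forall>x. l i \<le> F i x \<xi>"
    and L_nonneg: "L \<ge> 0"
    and smooth: "\<And>i. i < n \<Longrightarrow> AE \<xi> in D i. \<forall>x y.
                    norm (G i y \<xi> - G i x \<xi>) \<le> L * norm (x - y)"
    and mu_nonneg: "mu \<ge> 0"
    and convex: "\<And>i. i < n \<Longrightarrow> AE \<xi> in D i. \<forall>x y.
                    F i y \<xi> \<ge> F i x \<xi> + G i x \<xi> \<bullet> (y - x) + mu / 2 * (norm (y - x))\<^sup>2"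
    and xstar_min: "\<And>y. glob_obj F D n xstar \<le> glob_obj F D n y"
    and c_pos: "c > 0" and gb_pos: "gb > 0"
  shows "(let alpha = (if L = 0 then gb else min (1 / (2 * c * L)) gb);
              sigma2 = (\<Sum>i<n. loc_obj F D i xstar - l i) / real n;
              x = fedsps F G l c gb tau n x0;
              xbar = fedsps_avg F G l c gb tau n x0
          in (c \<ge> 2 * (real tau)\<^sup>2 \<longrightarrow>
               (\<forall>T\<ge>1. (1 / (real T * real n)) *
                   (\<Sum>t<T. \<Sum>i<n. \<integral>w. (loc_obj F D i (x w t i) - loc_obj F D i xstar)
                                         \<partial>sample_space D n T)
                 \<le> 2 / (real T * alpha) * (norm (x0 - xstar))\<^sup>2 + 4 * gb * sigma2 / alpha))
           \<and> (mu > 0 \<and> c \<ge> 4 * (real tau)\<^sup>2 \<longrightarrow>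
               (\<forall>T\<ge>1. (\<integral>w. (norm (xbar w T - xstar))\<^sup>2 \<partial>sample_space D n T)
                 \<le> 1 / (mu * alpha) * (1 - mu * alpha) ^ T * (norm (x0 - xstar))\<^sup>2
                    + 2 * gb * sigma2 / (alpha * mu))))"
proof -
  interpret fed n tau D F G l L mu c gb x0 xstar
    by unfold_locales (use n_pos tau_pos L_nonneg mu_nonneg c_pos gb_pos in auto)
  interpret fedm n tau D F G l L mu c gb x0 xstar
  proof unfold_locales
    show "\<And>i. i < n \<Longrightarrow> (\<lambda>(x, \<xi>). F i x \<xi>) \<in> borel_measurable (borel \<Otimes>\<^sub>M D i)" by (rule meas_F)
    show "\<And>i. i < n \<Longrightarrow> (\<lambda>(x, \<xi>). G i x \<xi>) \<in> borel_measurable (borel \<Otimes>\<^sub>M D i)" by (rule meas_G)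
    show "\<And>i x. i < n \<Longrightarrow> integrable (D i) (F i x)" by (rule int_F)
    show "\<And>i x. i < n \<Longrightarrow> (loc_obj F D i has_derivative (\<lambda>h. (\<integral>\<xi>. G i x \<xi> \<partial>D i) \<bullet> h)) (at x)"
      by (rule grad_f)
    fix i assume i: "i < n"
    interpret Pi: prob_space "D i" by (rule prob[OF i])
    show "\<exists>A. countable A \<and> A \<subseteq> sets (D i) \<and> \<Union> A = space (D i) \<and> (\<forall>a\<in>A. emeasure (D i) a \<noteq> \<infinity>)"
      by (rule Pi.sigma_finite_countable)
    show "emeasure (D i) (space (D i)) \<noteq> \<top>" by (rule Pi.finite_emeasure_space)
    show "emeasure (D i) (space (D i)) = 1" by (rule Pi.emeasure_space_1)
    show "AE \<xi> in D i. good i \<xi>"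
      using grad_F[OF i] lower[OF i] smooth[OF i] convex[OF i]
      unfolding good_def by eventually_elim auto
  qed
  show ?thesis
    unfolding Let_def alpha_def[symmetric] sig2_def[symmetric] sample_eq e0_def[symmetric]
  proof (intro conjI impI allI)
    fix T :: nat assume c2: "2 * (real tau)\<^sup>2 \<le> c" and T: "1 \<le> T"
    show "1 / (real T * real n) * (\<Sum>t<T. \<Sum>i<n. \<integral>w. (loc_obj F D i (xx w t i) - loc_obj F D i xstar) \<partial>PP T)
       \<le> 2 / (real T * alpha) * e0 + 4 * gb * sig2 / alpha"
      by (rule parta[OF c2 T])
  next
    fix T :: nat assume h: "0 < mu \<and> 4 * (real tau)\<^sup>2 \<le> c" and T: "1 \<le> T"
    show "(\<integral>w. (norm (xb w T - xstar))\<^sup>2 \<partial>PP T) \<le> 1 / (mu * alpha) * (1 - mu * alpha) ^ T * e0 + 2 * gb * sig2 / (alpha * mu)"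
      using partb[of T] h unfolding ee_def by auto
  qed
qed


end
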